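(* Let $\alpha,\beta\in\{-1,0,1\}$, and let $\tilde{C}\in\{0,1\}^{\tilde{K}\times n}$ and $\hat{C}\in\{0,1\}^{\hat{K}\times n}$ be cost matrices of two ordinal objectives on the same $n$ elements. Then the matrix \[ A=\begin{pmatrix}\alpha\,\tilde{C} & I_{\tilde{K}} & 0\\ \beta\,\hat{C} & 0 & I_{\hat{K}}\end{pmatrix} \] (the constraint matrix, in standard form with slack variables, of the system $\alpha\tilde{C}x\le \tilde{b}$, $\beta\hat{C}x\le\hat{b}$) is totally unimodular, where $I_m$ denotes the $m\times m$ identity matrix.
   Context: An ordinal objective on $n$ elements with $K$ categories $\eta_1\prec\dots\prec\eta_K$ is given by an assignment $o:\{1,\dots,n\}\to\{\eta_1,\dots,\eta_K\}$; its cost matrix $C\in\{0,1\}^{K\times n}$ has $C_{ji}=1$ if $j\le k$ where $o(i)=\eta_k$, and $C_{ji}=0$ otherwise. $\tilde{C}$ and $\hat{C}$ are such matrices for assignments $\tilde{o}$ (with $\tilde{K}$ categories) and $\hat{o}$ (with $\hat{K}$ categories). A matrix is totally unimodular if every square submatrix has determinant in $\{-1,0,1\}$. *)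

theory Defs
  imports "Jordan_Normal_Form.Determinant" "Jordan_Normal_Form.DL_Submatrix"
begin

definition totally_unimodular :: "int mat \<Rightarrow> bool" where
  "totally_unimodular A \<longleftrightarrow>
     (\<forall>I J. I \<subseteq> {0..<dim_row A} \<and> J \<subseteq> {0..<dim_col A} \<and> card I = card J
        \<longrightarrow> det (submatrix A I J) \<in> {-1, 0, 1})"

text \<open>An ordinal objective on n elements (indexed 0..n-1) with K categories
  eta_1 < ... < eta_K is an assignment o with o i in {1..K} (o i = k means
  element i gets category eta_k).  Its cost matrix (rows j = 0..K-1 standing for
  categories 1..K) has entry 1 iff j+1 <= o i.\<close>
definition ordinal_assignment :: "nat \<Rightarrow> nat \<Rightarrow> (nat \<Rightarrow> nat) \<Rightarrow> bool" where
  "ordinal_assignment K n asg \<longleftrightarrow> (\<forall>i<n. asg i \<in> {1..K})"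

definition ordinal_cost_matrix :: "nat \<Rightarrow> nat \<Rightarrow> (nat \<Rightarrow> nat) \<Rightarrow> int mat" where
  "ordinal_cost_matrix K n asg = mat K n (\<lambda>(j, i). if j + 1 \<le> asg i then 1 else 0)"

definition two_objective_matrix :: "int \<Rightarrow> int mat \<Rightarrow> int \<Rightarrow> int mat \<Rightarrow> int mat" where
  "two_objective_matrix \<alpha> Ct \<beta> Ch =
     (let Kt = dim_row Ct; Kh = dim_row Ch; n = dim_col Ct in
      mat (Kt + Kh) (n + Kt + Kh) (\<lambda>(r, c).
        if c < n then (if r < Kt then \<alpha> * Ct $$ (r, c) else \<beta> * Ch $$ (r - Kt, c))
        else if c - n = r then 1 else 0))"

end

theory Submission
  imports Defs
begin


definition netcol :: "int mat \<Rightarrow> nat \<Rightarrow> bool" where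
  "netcol M j \<longleftrightarrow> (\<forall>i<dim_row M. M $$ (i,j) \<in> {-1,0,1}) \<and>
     (\<forall>i i'. i < dim_row M \<longrightarrow> i' < dim_row M \<longrightarrow> M $$ (i,j) = 1 \<longrightarrow> M $$ (i',j) = 1 \<longrightarrow> i = i') \<and>
     (\<forall>i i'. i < dim_row M \<longrightarrow> i' < dim_row M \<longrightarrow> M $$ (i,j) = -1 \<longrightarrow> M $$ (i',j) = -1 \<longrightarrow> i = i')"

lemma mult3: "(a::int) \<in> {-1,0,1} \<Longrightarrow> b \<in> {-1,0,1} \<Longrightarrow> a * b \<in> {-1,0,1}"
  by auto

lemma net_det:
  assumes "M \<in> carrier_mat k k" "\<forall>j<k. netcol M j"
  shows "det M \<in> {-1,0,1}"
  using assms
proof (induction k arbitrary: M)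
  case 0
  then have "M = 1\<^sub>m 0" by (intro eq_matI) auto
  then show ?case by simp
next
  case (Suc l)
  note M = Suc.prems(1)
  show ?case
  proof (cases "\<exists>j<Suc l. \<exists>r<Suc l. \<forall>i<Suc l. i \<noteq> r \<longrightarrow> M $$ (i,j) = 0")
    case True
    then obtain j r where j: "j < Suc l" and r: "r < Suc l" and z: "\<forall>i<Suc l. i \<noteq> r \<longrightarrow> M $$ (i,j) = 0"
      by blast
    have "det M = (\<Sum>i<Suc l. M $$ (i,j) * cofactor M i j)"
      by (rule laplace_expansion_column[OF M j])
    also have "\<dots> = M $$ (r,j) * cofactor M r j"
    proof -
      have "(\<Sum>i<Suc l. M $$ (i,j) * cofactor M i j) = M $$ (r,j) * cofactor M r j + (\<Sum>i\<in>{..<Suc l} - {r}. M $$ (i,j) * cofactor M i j)"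
        by (rule sum.remove) (use r in auto)
      also have "(\<Sum>i\<in>{..<Suc l} - {r}. M $$ (i,j) * cofactor M i j) = 0"
        by (rule sum.neutral) (use z in auto)
      finally show ?thesis by simp
    qed
    finally have d: "det M = M $$ (r,j) * ((-1)^(r+j) * det (mat_delete M r j))"
      by (simp add: cofactor_def)
    have D: "mat_delete M r j \<in> carrier_mat l l" using mat_delete_carrier[OF M] by simp
    have "\<forall>j'<l. netcol (mat_delete M r j) j'"
    proof (intro allI impI)
      fix j' assume j': "j' < l"
      let ?g = "\<lambda>i'. if i' < r then i' else Suc i'"
      have e: "\<And>i'. i' < l \<Longrightarrow> mat_delete M r j $$ (i', j') = M $$ (?g i', if j' < j then j' else Suc j')"
        using M j' by (auto simp: mat_delete_def)
      have gl: "\<And>i'. i' < l \<Longrightarrow> ?g i' < Suc l" by auto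
      have gi: "\<And>a b. ?g a = ?g b \<Longrightarrow> a = b" by (auto split: if_splits)
      have jc: "(if j' < j then j' else Suc j') < Suc l" using j' by auto
      have nc: "netcol M (if j' < j then j' else Suc j')" using Suc.prems(2) jc by blast
      have dr: "dim_row (mat_delete M r j) = l" "dim_row M = Suc l" using D M by auto
      let ?c = "if j' < j then j' else Suc j'"
      have v: "\<And>i. i < Suc l \<Longrightarrow> M $$ (i,?c) \<in> {-1,0,1}" using nc dr unfolding netcol_def by auto
      have u1: "\<And>i i'. i < Suc l \<Longrightarrow> i' < Suc l \<Longrightarrow> M $$ (i,?c) = 1 \<Longrightarrow> M $$ (i',?c) = 1 \<Longrightarrow> i = i'"
        using nc dr unfolding netcol_def by auto
      have u2: "\<And>i i'. i < Suc l \<Longrightarrow> i' < Suc l \<Longrightarrow> M $$ (i,?c) = -1 \<Longrightarrow> M $$ (i',?c) = -1 \<Longrightarrow> i = i'"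
        using nc dr unfolding netcol_def by auto
      show "netcol (mat_delete M r j) j'"
        unfolding netcol_def dr(1)
      proof (intro conjI allI impI)
        fix i assume il: "i < l" then show "mat_delete M r j $$ (i, j') \<in> {-1,0,1}"
          unfolding e[OF il] using v[OF gl[OF il]] by simp
      next
        fix i i' assume a: "i < l" "i' < l" "mat_delete M r j $$ (i, j') = 1" "mat_delete M r j $$ (i', j') = 1"
        then have "?g i = ?g i'" using u1[OF gl[OF a(1)] gl[OF a(2)]] unfolding e[OF a(1)] e[OF a(2)] by simp
        then show "i = i'" using gi by blast
      next
        fix i i' assume a: "i < l" "i' < l" "mat_delete M r j $$ (i, j') = -1" "mat_delete M r j $$ (i', j') = -1"
        then have "?g i = ?g i'" using u2[OF gl[OF a(1)] gl[OF a(2)]] unfolding e[OF a(1)] e[OF a(2)] by simp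
        then show "i = i'" using gi by blast
      qed
    qed
    then have "det (mat_delete M r j) \<in> {-1,0,1}" using Suc.IH D by blast
    moreover have "M $$ (r,j) \<in> {-1,0,1}" using Suc.prems(2) j r M unfolding netcol_def by auto
    moreover have "((-1::int)^(r+j)) \<in> {-1,0,1}"
      by (cases "even (r+j)") auto
    ultimately show ?thesis unfolding d using mult3 by (metis mult.assoc)
  next
    case False
    define v where "v = vec (Suc l) (\<lambda>_. 1::int)"
    have colsum: "(\<Sum>i<Suc l. M $$ (i,j)) = 0" if j: "j < Suc l" for j
    proof -
      have nc: "netcol M j" using Suc.prems(2) j by blast
      from False j obtain i1 where i1: "i1 < Suc l" "M $$ (i1,j) \<noteq> 0"
        by (metis zero_less_Suc)
      from False j i1 obtain i2 where i2: "i2 < Suc l" "i2 \<noteq> i1" "M $$ (i2,j) \<noteq> 0"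
        by blast
      have vals: "\<And>i. i < Suc l \<Longrightarrow> M $$ (i,j) \<in> {-1,0,1}" using nc M unfolding netcol_def by auto
      have u1: "\<And>i i'. i < Suc l \<Longrightarrow> i' < Suc l \<Longrightarrow> M $$ (i,j) = 1 \<Longrightarrow> M $$ (i',j) = 1 \<Longrightarrow> i = i'"
        using nc M unfolding netcol_def by auto
      have u2: "\<And>i i'. i < Suc l \<Longrightarrow> i' < Suc l \<Longrightarrow> M $$ (i,j) = -1 \<Longrightarrow> M $$ (i',j) = -1 \<Longrightarrow> i = i'"
        using nc M unfolding netcol_def by auto
      have s12: "M $$ (i1,j) + M $$ (i2,j) = 0"
        using vals[OF i1(1)] vals[OF i2(1)] i1 i2 u1 u2 by auto
      have rest: "\<And>i. i < Suc l \<Longrightarrow> i \<noteq> i1 \<Longrightarrow> i \<noteq> i2 \<Longrightarrow> M $$ (i,j) = 0"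
      proof -
        fix i assume i: "i < Suc l" "i \<noteq> i1" "i \<noteq> i2"
        have c: "(M $$ (i1,j) = 1 \<and> M $$ (i2,j) = -1) \<or> (M $$ (i1,j) = -1 \<and> M $$ (i2,j) = 1)"
          using vals[OF i1(1)] vals[OF i2(1)] i1 i2 s12 by auto
        show "M $$ (i,j) = 0"
        proof (rule ccontr)
          assume nz: "M $$ (i,j) \<noteq> 0"
          then have "M $$ (i,j) = 1 \<or> M $$ (i,j) = -1" using vals[OF i(1)] by auto
          then show False
            using c u1[OF i(1) i1(1)] u1[OF i(1) i2(1)] u2[OF i(1) i1(1)] u2[OF i(1) i2(1)] i by auto
        qed
      qed
      have "(\<Sum>i<Suc l. M $$ (i,j)) = M $$ (i1,j) + (\<Sum>i\<in>{..<Suc l} - {i1}. M $$ (i,j))"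
        by (rule sum.remove) (use i1 in auto)
      also have "(\<Sum>i\<in>{..<Suc l} - {i1}. M $$ (i,j)) = M $$ (i2,j) + (\<Sum>i\<in>{..<Suc l} - {i1} - {i2}. M $$ (i,j))"
        by (rule sum.remove) (use i2 in auto)
      also have "(\<Sum>i\<in>{..<Suc l} - {i1} - {i2}. M $$ (i,j)) = 0"
        by (rule sum.neutral) (use rest in auto)
      finally show ?thesis using s12 by simp
    qed
    have MT: "transpose_mat M \<in> carrier_mat (Suc l) (Suc l)" using M by auto
    have "transpose_mat M *\<^sub>v v = 0\<^sub>v (Suc l)"
    proof (rule eq_vecI)
      fix j assume j: "j < dim_vec (0\<^sub>v (Suc l) :: int vec)"
      then have j': "j < Suc l" by simp
      have "(transpose_mat M *\<^sub>v v) $ j = (\<Sum>i\<in>{0..<Suc l}. M $$ (i,j))"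
        using M j' by (simp add: v_def scalar_prod_def)
      also have "\<dots> = 0" using colsum[OF j'] by (simp add: atLeast0LessThan)
      finally show "(transpose_mat M *\<^sub>v v) $ j = 0\<^sub>v (Suc l) $ j" using j' by simp
    qed (use M in \<open>auto simp: v_def\<close>)
    moreover have "v \<noteq> 0\<^sub>v (Suc l)"
    proof
      assume "v = 0\<^sub>v (Suc l)"
      then have "v $ 0 = 0\<^sub>v (Suc l) $ 0" by simp
      then show False by (simp add: v_def)
    qed
    moreover have "v \<in> carrier_vec (Suc l)" by (simp add: v_def)
    ultimately have "det (transpose_mat M) = 0"
      using det_0_iff_vec_prod_zero[OF MT] by blast
    then show ?thesis using det_transpose[OF M] by simp
  qed
qed



definition pcol :: "int mat \<Rightarrow> nat \<Rightarrow> nat \<Rightarrow> bool" where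
  "pcol N p j \<longleftrightarrow>
   (\<exists>r c. c \<in> {-1,1} \<and> (\<forall>i<dim_row N. N $$ (i,j) = (if i = r then c else 0))) \<or>
   (\<exists>f. (\<forall>i i'. i \<le> i' \<longrightarrow> i' < p \<longrightarrow> f i' \<longrightarrow> f i) \<and>
        (\<forall>i i'. p \<le> i \<longrightarrow> i \<le> i' \<longrightarrow> i' < dim_row N \<longrightarrow> f i' \<longrightarrow> f i) \<and>
        (\<forall>i<dim_row N. N $$ (i,j) = (if f i then 1 else 0)))"

lemma pref_unique:
  assumes m: "\<forall>i i'. a \<le> i \<longrightarrow> i \<le> i' \<longrightarrow> i' < b \<longrightarrow> f i' \<longrightarrow> f i"
    and "a \<le> i" "a \<le> i'" "i < b" "i' < b" "f i" "f i'"
    and "\<not> (Suc i < b \<and> f (Suc i))" "\<not> (Suc i' < b \<and> f (Suc i'))"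
  shows "i = i'"
proof (rule ccontr)
  assume "i \<noteq> i'"
  then consider "i < i'" | "i' < i" by linarith
  then show False
  proof cases
    case 1
    have "f (Suc i)" using m[rule_format, of "Suc i" i'] assms 1 by auto
    then show False using assms 1 by auto
  next
    case 2
    have "f (Suc i')" using m[rule_format, of "Suc i'" i] assms 2 by auto
    then show False using assms 2 by auto
  qed
qed

lemma prod_pm1: assumes "\<forall>i<(k::nat). g i \<in> {-1,1::int}" shows "(\<Prod>i<k. g i) \<in> {-1,1}"
  using assms by (induct k) auto

lemma pcol_det:
  assumes N: "N \<in> carrier_mat k k" and pk: "p \<le> k" and cols: "\<forall>j<k. pcol N p j"
  shows "det N \<in> {-1,0,1}"
proof -
  define s where "s i = (if i < p then 1 else -1 :: int)" for i
  define L where "L = mat k k (\<lambda>(i,l). s i * ((if l = i then 1 else 0) - (if l = Suc i \<and> Suc i \<noteq> p then 1 else 0)))"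
  have Lc: "L \<in> carrier_mat k k" by (simp add: L_def)
  have W: "(L * N) $$ (i,j) = s i * (N $$ (i,j) - (if Suc i < k \<and> Suc i \<noteq> p then N $$ (Suc i,j) else 0))"
    if i: "i < k" and j: "j < k" for i j
  proof -
    have "(L * N) $$ (i,j) = (\<Sum>l\<in>{0..<k}. L $$ (i,l) * N $$ (l,j))"
      using i j N Lc by (simp add: scalar_prod_def)
    also have "\<dots> = (\<Sum>l\<in>{0..<k}. (if l = i then s i * N $$ (i,j) else 0) -
                  (if l = Suc i then (if Suc i \<noteq> p then s i * N $$ (Suc i,j) else 0) else 0))"
      by (rule sum.cong) (auto simp: L_def i algebra_simps)
    also have "\<dots> = s i * (N $$ (i,j) - (if Suc i < k \<and> Suc i \<noteq> p then N $$ (Suc i,j) else 0))"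
      using i by (simp add: sum_subtractf algebra_simps)
    finally show ?thesis .
  qed
  have ut: "upper_triangular L" unfolding upper_triangular_def L_def by auto
  have "det L = (\<Prod>i = 0..<k. L $$ (i,i))"
    using det_upper_triangular[OF ut Lc] Lc by (simp add: prod_list_diag_prod)
  also have "\<dots> = (\<Prod>i<k. s i)" by (rule prod.cong) (auto simp: L_def)
  finally have dL: "det L \<in> {-1,1}" using prod_pm1[of k s] by (auto simp: s_def)
  have LN: "L * N \<in> carrier_mat k k" using Lc N by auto
  have "\<forall>j<k. netcol (L * N) j"
  proof (intro allI impI)
    fix j assume j: "j < k"
    have dr: "dim_row (L * N) = k" using LN by auto
    from cols j have "pcol N p j" by blast
    then consider (U) r c where "c \<in> {-1,1}" "\<forall>i<k. N $$ (i,j) = (if i = r then c else 0)"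
      | (P) f where "\<forall>i i'. i \<le> i' \<longrightarrow> i' < p \<longrightarrow> f i' \<longrightarrow> f i"
        "\<forall>i i'. p \<le> i \<longrightarrow> i \<le> i' \<longrightarrow> i' < k \<longrightarrow> f i' \<longrightarrow> f i"
        "\<forall>i<k. N $$ (i,j) = (if f i then 1 else 0)"
      unfolding pcol_def using N by auto
    then show "netcol (L * N) j"
    proof cases
      case U
      have w: "(L * N) $$ (i,j) = s i * ((if i = r then c else 0) - (if Suc i < k \<and> Suc i \<noteq> p \<and> Suc i = r then c else 0))"
        if "i < k" for i using W[OF that j] U that by auto
      show ?thesis unfolding netcol_def dr
      proof (intro conjI allI impI)
        fix i assume "i < k" then show "(L * N) $$ (i,j) \<in> {-1,0,1}"
          using U(1) unfolding w[OF \<open>i<k\<close>] s_def by auto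
      next
        fix i i' assume a: "i < k" "i' < k" "(L * N) $$ (i,j) = 1" "(L * N) $$ (i',j) = 1"
        then show "i = i'" using U(1) unfolding w[OF a(1)] w[OF a(2)] s_def
          by (auto split: if_splits)
      next
        fix i i' assume a: "i < k" "i' < k" "(L * N) $$ (i,j) = -1" "(L * N) $$ (i',j) = -1"
        then show "i = i'" using U(1) unfolding w[OF a(1)] w[OF a(2)] s_def
          by (auto split: if_splits)
      qed
    next
      case P
      have w: "(L * N) $$ (i,j) = s i * ((if f i then 1 else 0) - (if Suc i < k \<and> Suc i \<noteq> p \<and> f (Suc i) then 1 else 0))"
        if "i < k" for i using W[OF that j] P(3) that by auto
      have m1: "f i" if "Suc i < p" "f (Suc i)" for i using P(1)[rule_format, of i "Suc i"] that by auto
      have m2: "f i" if "p \<le> i" "Suc i < k" "f (Suc i)" for i using P(2)[rule_format, of i "Suc i"] that by auto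
      have m1': "\<forall>i i'. 0 \<le> i \<longrightarrow> i \<le> i' \<longrightarrow> i' < p \<longrightarrow> f i' \<longrightarrow> f i" using P(1) by auto
      have pos: "i < p \<and> f i \<and> \<not> (Suc i < p \<and> f (Suc i))" if "i < k" "(L * N) $$ (i,j) = 1" for i
        using that m1 m2 pk unfolding w[OF that(1)] s_def by (auto split: if_splits)
      have neg: "p \<le> i \<and> f i \<and> \<not> (Suc i < k \<and> f (Suc i))" if "i < k" "(L * N) $$ (i,j) = -1" for i
        using that m1 m2 pk unfolding w[OF that(1)] s_def by (auto split: if_splits)
      show ?thesis unfolding netcol_def dr
      proof (intro conjI allI impI)
        fix i assume "i < k" then show "(L * N) $$ (i,j) \<in> {-1,0,1}"
          using m1[of i] m2[of i] pk unfolding w[OF \<open>i<k\<close>] s_def by auto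
      next
        fix i i' assume a: "i < k" "i' < k" "(L * N) $$ (i,j) = 1" "(L * N) $$ (i',j) = 1"
        show "i = i'" using pos[OF a(1) a(3)] pos[OF a(2) a(4)]
          by (intro pref_unique[OF m1', of i i']) auto
      next
        fix i i' assume a: "i < k" "i' < k" "(L * N) $$ (i,j) = -1" "(L * N) $$ (i',j) = -1"
        show "i = i'" using neg[OF a(1) a(3)] neg[OF a(2) a(4)] a(1,2)
          by (intro pref_unique[OF P(2), of i i']) auto
      qed
    qed
  qed
  then have "det (L * N) \<in> {-1,0,1}" using net_det[OF LN] by blast
  moreover have "det (L * N) = det L * det N" by (rule det_mult[OF Lc N])
  ultimately show ?thesis using dL by auto
qed



theorem corollary1:
  fixes n Kt Kh :: nat and ot oh :: "nat \<Rightarrow> nat" and \<alpha> \<beta> :: int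
  assumes "\<alpha> \<in> {-1, 0, 1}" and "\<beta> \<in> {-1, 0, 1}"
    and "ordinal_assignment Kt n ot" and "ordinal_assignment Kh n oh"
  shows "totally_unimodular
           (two_objective_matrix \<alpha> (ordinal_cost_matrix Kt n ot) \<beta> (ordinal_cost_matrix Kh n oh))"
proof -
  define A where "A = two_objective_matrix \<alpha> (ordinal_cost_matrix Kt n ot) \<beta> (ordinal_cost_matrix Kh n oh)"
  have dA: "dim_row A = Kt + Kh" "dim_col A = n + Kt + Kh"
    by (simp_all add: A_def two_objective_matrix_def ordinal_cost_matrix_def Let_def)
  have Aent: "A $$ (i,c) = (if c < n then (if i < Kt then \<alpha> * (if i + 1 \<le> ot c then 1 else 0)
                else \<beta> * (if i - Kt + 1 \<le> oh c then 1 else 0)) else if c - n = i then 1 else 0)"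
    if "i < Kt + Kh" "c < n + Kt + Kh" for i c
    using that by (simp add: A_def two_objective_matrix_def ordinal_cost_matrix_def Let_def)
  show ?thesis unfolding A_def[symmetric] totally_unimodular_def
  proof (intro allI impI)
    fix I J assume H: "I \<subseteq> {0..<dim_row A} \<and> J \<subseteq> {0..<dim_col A} \<and> card I = card J"
    define k where "k = card I"
    have fI: "finite I" and fJ: "finite J" using H finite_subset by blast+
    have sI: "{i. i < dim_row A \<and> i \<in> I} = I" and sJ: "{j. j < dim_col A \<and> j \<in> J} = J"
      using H by auto
    define S where "S = submatrix A I J"
    have "dim_row S = k" unfolding S_def dim_submatrix(1) sI k_def ..
    moreover have "dim_col S = k"
    proof -
      have c1: "dim_col S = card J" unfolding S_def dim_submatrix(2) sJ ..
      have c2: "card I = card J" using H by blast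
      show ?thesis using c1 c2 k_def by linarith
    qed
    ultimately have Sc: "S \<in> carrier_mat k k" by (rule carrier_matI)
    have cIJ: "card I = card J" using H by blast
    have Sent: "S $$ (i,j) = A $$ (pick I i, pick J j)" if "i < k" "j < k" for i j
    proof -
      have a: "i < card {i. i < dim_row A \<and> i \<in> I}" unfolding sI using that(1) k_def by simp
      have b: "j < card {j. j < dim_col A \<and> j \<in> J}" unfolding sJ using that(2) k_def cIJ by linarith
      show ?thesis unfolding S_def by (rule submatrix_index[OF a b])
    qed
    have pI: "pick I i < Kt + Kh" if "i < k" for i
      using pick_in_set[of i I] that H dA k_def by auto
    have pJ: "pick J j < n + Kt + Kh" if "j < k" for j
      using pick_in_set[of j J] that H dA k_def by auto
    have pmono: "pick I i \<le> pick I i'" if "i \<le> i'" "i' < k" for i i'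
      using pick_mono[of i' I i] that k_def by (cases "i = i'") auto
    have pinj: "i = i'" if "pick I i = pick I i'" "i < k" "i' < k" for i i'
      using pick_mono[of i I i'] pick_mono[of i' I i] that k_def by (metis nat_neq_iff)
    define p where "p = card {a\<in>I. a < Kt}"
    have pk: "p \<le> k" unfolding p_def k_def by (rule card_mono[OF fI]) auto
    have blk: "i < p \<longleftrightarrow> pick I i < Kt" if i: "i < k" for i
    proof -
      have cp: "card {a\<in>I. a < pick I i} = i" using card_pick[of i I] i k_def by auto
      have pin: "pick I i \<in> I" using pick_in_set[of i I] i k_def by auto
      show ?thesis
      proof
        assume "i < p"
        show "pick I i < Kt"
        proof (rule ccontr)
          assume "\<not> pick I i < Kt"
          then have "{a\<in>I. a < Kt} \<subseteq> {a\<in>I. a < pick I i}" by auto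
          then have "p \<le> i" unfolding p_def using cp card_mono[of "{a\<in>I. a < pick I i}"] fI by auto
          then show False using \<open>i < p\<close> by simp
        qed
      next
        assume lt: "pick I i < Kt"
        have "{a\<in>I. a < pick I i} \<subset> {a\<in>I. a < Kt}" using lt pin by auto
        then have "card {a\<in>I. a < pick I i} < card {a\<in>I. a < Kt}" using fI by (intro psubset_card_mono) auto
        then show "i < p" using cp p_def by simp
      qed
    qed
    define \<sigma> where "\<sigma> i = (if pick I i < Kt then \<alpha> else \<beta>)" for i
    define \<sigma>' where "\<sigma>' i = (if \<sigma> i = 0 then 1 else \<sigma> i)" for i
    have s'pm: "\<sigma>' i \<in> {-1,1}" for i using assms(1,2) by (auto simp: \<sigma>'_def \<sigma>_def)
    define N where "N = mat k k (\<lambda>(i,j). \<sigma>' i * S $$ (i,j))"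
    have Nc: "N \<in> carrier_mat k k" by (simp add: N_def)
    have SDN: "S = mat_diag k \<sigma>' * N"
    proof -
      have "mat_diag k \<sigma>' * N = mat k k (\<lambda>(i,j). \<sigma>' i * N $$ (i,j))" by (rule mat_diag_mult_left[OF Nc])
      also have "\<dots> = S"
      proof (rule eq_matI)
        fix i j assume "i < dim_row S" "j < dim_col S"
        then have ij: "i < k" "j < k" using Sc by auto
        have "\<sigma>' i * \<sigma>' i = 1" using s'pm[of i] by auto
        then show "mat k k (\<lambda>(i,j). \<sigma>' i * N $$ (i,j)) $$ (i,j) = S $$ (i,j)"
          using ij by (simp add: N_def mult.assoc[symmetric])
      qed (use Sc in auto)
      finally show ?thesis by simp
    qed
    have Dc: "mat_diag k \<sigma>' \<in> carrier_mat k k" by simp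
    have utD: "upper_triangular (mat_diag k \<sigma>')" by (auto simp: upper_triangular_def mat_diag_def)
    have "det (mat_diag k \<sigma>') = (\<Prod>i = 0..<k. mat_diag k \<sigma>' $$ (i,i))"
      using det_upper_triangular[OF utD Dc] by (simp add: prod_list_diag_prod mat_diag_def)
    also have "\<dots> = (\<Prod>i<k. \<sigma>' i)" by (rule prod.cong) (auto simp: mat_diag_def)
    finally have dD: "det (mat_diag k \<sigma>') \<in> {-1,1}" using prod_pm1[of k \<sigma>'] s'pm by auto
    have "\<forall>j<k. pcol N p j"
    proof (intro allI impI)
      fix j assume j: "j < k"
      define c where "c = pick J j"
      have c: "c < n + Kt + Kh" using pJ[OF j] c_def by simp
      have Nent: "N $$ (i,j) = \<sigma>' i * A $$ (pick I i, c)" if "i < k" for i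
        using that j Sent by (simp add: N_def c_def)
      have dN: "dim_row N = k" using Nc by auto
      show "pcol N p j"
      proof (cases "c < n")
        case True
        define f where "f i = (if pick I i < Kt then \<alpha> \<noteq> 0 \<and> pick I i + 1 \<le> ot c
                                 else \<beta> \<noteq> 0 \<and> pick I i - Kt + 1 \<le> oh c)" for i
        have e: "N $$ (i,j) = (if f i then 1 else 0)" if "i < k" for i
          unfolding Nent[OF that] Aent[OF pI[OF that] c] using True assms(1,2)
          by (auto simp: f_def \<sigma>'_def \<sigma>_def)
        have m1: "f i" if "i \<le> i'" "i' < p" "f i'" for i i'
        proof -
          have "pick I i' < Kt" "pick I i < Kt" using blk[of i'] blk[of i] that pk by auto
          moreover have "pick I i \<le> pick I i'" using pmono that pk by auto
          ultimately show ?thesis using that(3) by (auto simp: f_def)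
        qed
        have m2: "f i" if "p \<le> i" "i \<le> i'" "i' < k" "f i'" for i i'
        proof -
          have "\<not> pick I i' < Kt" "\<not> pick I i < Kt" using blk[of i'] blk[of i] that by auto
          moreover have "pick I i \<le> pick I i'" using pmono that by auto
          ultimately show ?thesis using that(4) by (auto simp: f_def)
        qed
        show ?thesis unfolding pcol_def dN
          by (rule disjI2, rule exI[of _ f]) (use e m1 m2 in blast)
      next
        case False
        have e0: "N $$ (i,j) = (if pick I i = c - n then \<sigma>' i else 0)" if "i < k" for i
          unfolding Nent[OF that] Aent[OF pI[OF that] c] using False by auto
        show ?thesis
        proof (cases "\<exists>r<k. pick I r = c - n")
          case True
          then obtain r where r: "r < k" "pick I r = c - n" by blast
          have h: "N $$ (i,j) = (if i = r then \<sigma>' r else 0)" if "i < k" for i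
          proof (cases "i = r")
            case True
            then show ?thesis unfolding e0[OF that] using r by simp
          next
            case ne: False
            have "pick I i \<noteq> c - n"
            proof
              assume "pick I i = c - n"
              then have "pick I i = pick I r" using r(2) by simp
              then show False using pinj[OF _ that r(1)] ne by blast
            qed
            then show ?thesis unfolding e0[OF that] using ne by simp
          qed
          show ?thesis unfolding pcol_def dN
            by (intro disjI1 exI[of _ r] exI[of _ "\<sigma>' r"] conjI allI impI s'pm h)
        next
          case nr: False
          have "N $$ (i,j) = (if i = k then 1 else 0)" if "i < k" for i
            unfolding e0[OF that] using nr that by auto
          then show ?thesis unfolding pcol_def dN by (intro disjI1 exI[of _ k] exI[of _ 1]) auto
        qed
      qed
    qed
    then have "det N \<in> {-1,0,1}" using pcol_det[OF Nc pk] by blast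
    moreover have "det S = det (mat_diag k \<sigma>') * det N" unfolding SDN by (rule det_mult[OF Dc Nc])
    ultimately show "det (submatrix A I J) \<in> {-1,0,1}" using dD unfolding S_def by auto
  qed
qed

end
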